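(* Let $q$ be a root of unity with $q^4\neq1$, let $\sigma\in\mathbb C^\times$ be general, $w\in\mathbb C$, and $(\vec s,\vec t)\in E^0_{\sigma,w}$. Let $V$ have basis $\{v_i:i\in\mathbb Z/D\}$. Then $\rho(\alpha_0)v_i=\lambda_iv_i$, $\rho(\alpha_1)v_i=q^{2i+1}\sigma s_iv_{i+1}+q^{-2i+1}\sigma^{-1}t_{i-1}v_{i-1}$, $\rho(\alpha_\infty)v_i=s_iv_{i+1}+t_{i-1}v_{i-1}$ define a representation $\rho:\mathcal S_q(\Sigma_{1,1})\to\mathrm{End}(V)$, and moreover $\rho(A_0)=z_0\,\mathrm{id}_V$ and $\rho(p)=w\,\mathrm{id}_V$.
   Context: $\mathcal S_q(\Sigma_{1,1})$ is the Kauffman bracket skein algebra of the one-punctured torus (framed links in $\Sigma_{1,1}\times(-1,1)$ modulo the Kauffman bracket relation and trivial loop $=-q^2-q^{-2}$). It is generated by the slope $0,1,\infty$ curves $\alpha_0,\alpha_1,\alpha_\infty$ subject to $q\alpha_0\alpha_\infty-q^{-1}\alpha_\infty\alpha_0=(q^2-q^{-2})\alpha_1$, $q\alpha_1\alpha_0-q^{-1}\alpha_0\alpha_1=(q^2-q^{-2})\alpha_\infty$, $q\alpha_\infty\alpha_1-q^{-1}\alpha_1\alpha_\infty=(q^2-q^{-2})\alpha_0$; the peripheral curve is $p=q\alpha_0\alpha_\infty\alpha_1-q^2\alpha_0^2-q^2\alpha_1^2-q^{-2}\alpha_\infty^2+q^2+q^{-2}$. For $q$ a root of unity, $n=\mathrm{ord}(q^2)$,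 $D=n$, $T_D$ is the Chebyshev polynomial with $T_D(t+t^{-1})=t^D+t^{-D}$, and $A_0=T_D(\alpha_0)$. For $\sigma\in\mathbb C^\times$ set $z_0=\sigma^D+\sigma^{-D}$, $\lambda_i=q^{2i}\sigma+q^{-2i}\sigma^{-1}$, $\hat\lambda_i=q^{2i}\sigma-q^{-2i}\sigma^{-1}$ ($i\in\mathbb Z/D$). $\sigma$ is general if $z_0\neq\pm2$, or $z_0=-2$ and $n$ is even (equivalently, all $\hat\lambda_i\neq0$). For general $\sigma$ and $w\in\mathbb C$: $r_i(\sigma,w)=\dfrac{w+q^{4i+2}\sigma^2+q^{-4i-2}\sigma^{-2}}{\hat\lambda_i\hat\lambda_{i+1}}$ and $E^0_{\sigma,w}=\{(s_1,\dots,s_D,t_1,\dots,t_D)\in\mathbb C^{2D}: s_it_i=r_i(\sigma,w)\ \forall i\}$ (indices mod $D$). *)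

theory Defs
  imports Complex_Main
begin

text \<open>Endomorphisms of V = span of basis v_0,...,v_{D-1} (indices read mod D) are
represented as D x D matrices M :: nat => nat => complex, where M i j is the
coefficient of v_i in M v_j. Only entries with i, j < D are meaningful.\<close>

type_synonym cmat = "nat \<Rightarrow> nat \<Rightarrow> complex"

definition mmul :: "nat \<Rightarrow> cmat \<Rightarrow> cmat \<Rightarrow> cmat" where
  "mmul D A B = (\<lambda>i j. \<Sum>l<D. A i l * B l j)"

definition madd :: "cmat \<Rightarrow> cmat \<Rightarrow> cmat" where
  "madd A B = (\<lambda>i j. A i j + B i j)"

definition msmult :: "complex \<Rightarrow> cmat \<Rightarrow> cmat" where
  "msmult c A = (\<lambda>i j. c * A i j)"

definition mid :: cmat where
  "mid = (\<lambda>i j. if i = j then 1 else 0)"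

definition meq :: "nat \<Rightarrow> cmat \<Rightarrow> cmat \<Rightarrow> bool" where
  "meq D A B \<longleftrightarrow> (\<forall>i<D. \<forall>j<D. A i j = B i j)"

text \<open>Chebyshev polynomial T_k applied to a matrix: T_0 = 2, T_1 = x,
T_{k+2} = x T_{k+1} - T_k, so that T_k(t + 1/t) = t^k + t^{-k}.\<close>
fun cheb_mat :: "nat \<Rightarrow> nat \<Rightarrow> cmat \<Rightarrow> cmat" where
  "cheb_mat D 0 A = msmult 2 mid"
| "cheb_mat D (Suc 0) A = A"
| "cheb_mat D (Suc (Suc k)) A =
     madd (mmul D A (cheb_mat D (Suc k) A)) (msmult (-1) (cheb_mat D k A))"

definition root_of_unity :: "complex \<Rightarrow> bool" where
  "root_of_unity q \<longleftrightarrow> (\<exists>m::nat. m > 0 \<and> q ^ m = 1)"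

definition ordq2 :: "complex \<Rightarrow> nat" where
  "ordq2 q = (LEAST k::nat. k > 0 \<and> (q\<^sup>2) ^ k = 1)"

definition z0 :: "nat \<Rightarrow> complex \<Rightarrow> complex" where
  "z0 D \<sigma> = \<sigma> ^ D + inverse \<sigma> ^ D"

definition lam :: "complex \<Rightarrow> complex \<Rightarrow> int \<Rightarrow> complex" where
  "lam q \<sigma> i = q powi (2*i) * \<sigma> + q powi (-2*i) * inverse \<sigma>"

definition lamhat :: "complex \<Rightarrow> complex \<Rightarrow> int \<Rightarrow> complex" where
  "lamhat q \<sigma> i = q powi (2*i) * \<sigma> - q powi (-2*i) * inverse \<sigma>"

definition general_sigma :: "complex \<Rightarrow> complex \<Rightarrow> bool" where
  "general_sigma q \<sigma> \<longleftrightarrow> \<sigma> \<noteq> 0 \<and>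
     ((z0 (ordq2 q) \<sigma> \<noteq> 2 \<and> z0 (ordq2 q) \<sigma> \<noteq> -2) \<or>
      (z0 (ordq2 q) \<sigma> = -2 \<and> even (ordq2 q)))"

definition r_coef :: "complex \<Rightarrow> complex \<Rightarrow> complex \<Rightarrow> int \<Rightarrow> complex" where
  "r_coef q \<sigma> w i = (w + q powi (4*i+2) * \<sigma>\<^sup>2 + q powi (-4*i-2) * inverse (\<sigma>\<^sup>2)) /
                     (lamhat q \<sigma> i * lamhat q \<sigma> (i+1))"

text \<open>E^0_{sigma,w}: s, t indexed by i in {0..<D} (representatives of Z/D).\<close>
definition E0 :: "complex \<Rightarrow> complex \<Rightarrow> complex \<Rightarrow> ((nat \<Rightarrow> complex) \<times> (nat \<Rightarrow> complex)) set" where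
  "E0 q \<sigma> w = {(s, t). \<forall>i < ordq2 q. s i * t i = r_coef q \<sigma> w (int i)}"

definition rho0 :: "nat \<Rightarrow> complex \<Rightarrow> complex \<Rightarrow> cmat" where
  "rho0 D q \<sigma> = (\<lambda>i j. if i = j then lam q \<sigma> (int j) else 0)"

definition rho1 :: "nat \<Rightarrow> complex \<Rightarrow> complex \<Rightarrow> (nat \<Rightarrow> complex) \<Rightarrow> (nat \<Rightarrow> complex) \<Rightarrow> cmat" where
  "rho1 D q \<sigma> s t = (\<lambda>i j.
     (if i = (j + 1) mod D then q powi (2 * int j + 1) * \<sigma> * s j else 0) +
     (if j = (i + 1) mod D then q powi (-2 * int j + 1) * inverse \<sigma> * t i else 0))"

definition rhoInf :: "nat \<Rightarrow> (nat \<Rightarrow> complex) \<Rightarrow> (nat \<Rightarrow> complex) \<Rightarrow> cmat" where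
  "rhoInf D s t = (\<lambda>i j.
     (if i = (j + 1) mod D then s j else 0) +
     (if j = (i + 1) mod D then t i else 0))"

definition skein_rels :: "nat \<Rightarrow> complex \<Rightarrow> cmat \<Rightarrow> cmat \<Rightarrow> cmat \<Rightarrow> bool" where
  "skein_rels D q a0 a1 ainf \<longleftrightarrow>
     meq D (madd (msmult q (mmul D a0 ainf)) (msmult (- inverse q) (mmul D ainf a0)))
           (msmult (q^2 - inverse (q^2)) a1) \<and>
     meq D (madd (msmult q (mmul D a1 a0)) (msmult (- inverse q) (mmul D a0 a1)))
           (msmult (q^2 - inverse (q^2)) ainf) \<and>
     meq D (madd (msmult q (mmul D ainf a1)) (msmult (- inverse q) (mmul D a1 ainf)))
           (msmult (q^2 - inverse (q^2)) a0)"

definition periph :: "nat \<Rightarrow> complex \<Rightarrow> cmat \<Rightarrow> cmat \<Rightarrow> cmat \<Rightarrow> cmat" where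
  "periph D q a0 a1 ainf =
     madd (msmult q (mmul D a0 (mmul D ainf a1)))
    (madd (msmult (- (q^2)) (mmul D a0 a0))
    (madd (msmult (- (q^2)) (mmul D a1 a1))
    (madd (msmult (- inverse (q^2)) (mmul D ainf ainf))
          (msmult (q^2 + inverse (q^2)) mid))))"

end

theory Submission
  imports Defs
begin

definition sD :: "nat \<Rightarrow> nat \<Rightarrow> nat" where "sD D j = (j + 1) mod D"
definition pD :: "nat \<Rightarrow> nat \<Rightarrow> nat" where "pD D j = (j + D - 1) mod D"

definition penta :: "nat \<Rightarrow> (nat \<Rightarrow> complex) \<Rightarrow> (nat \<Rightarrow> complex) \<Rightarrow> (nat \<Rightarrow> complex)
   \<Rightarrow> (nat \<Rightarrow> complex) \<Rightarrow> (nat \<Rightarrow> complex) \<Rightarrow> cmat" where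
  "penta D a b c d e = (\<lambda>i j. if i < D \<and> j < D then
     (if i = j then a j else 0) + (if i = sD D j then b j else 0) + (if i = pD D j then c j else 0)
   + (if i = sD D (sD D j) then d j else 0) + (if i = pD D (pD D j) then e j else 0) else 0)"

lemma sD_lt[simp]: "0 < D \<Longrightarrow> sD D j < D" by (simp add: sD_def)
lemma pD_lt[simp]: "0 < D \<Longrightarrow> pD D j < D" by (simp add: pD_def)
lemma pD_sD[simp]: "j < D \<Longrightarrow> pD D (sD D j) = j"
proof (cases "j + 1 < D")
  case True
  assume "j < D"
  then show ?thesis using True unfolding pD_def sD_def by simp
next
  case False
  assume "j < D"
  then have "j + 1 = D" using False by simp
  then show ?thesis unfolding pD_def sD_def by simp
qed
lemma sD_pD[simp]: "j < D \<Longrightarrow> sD D (pD D j) = j"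
proof (cases j)
  case 0
  assume "j < D" then show ?thesis using 0 unfolding pD_def sD_def by simp
next
  case (Suc k)
  assume "j < D"
  then have "pD D j = k" using Suc unfolding pD_def by simp
  then show ?thesis using Suc \<open>j < D\<close> unfolding sD_def by simp
qed
lemma eq_sD_iff: "i < D \<Longrightarrow> j < D \<Longrightarrow> (j = sD D i) = (i = pD D j)"
  by (metis pD_sD sD_pD)

lemma if_ob: "(if P then x else 0) = of_bool P * (x::complex)" by simp
lemma if0_mult: "(if P then x else 0) * (y::complex) = (if P then x * y else 0)" by simp
lemma if0_add: "(if P then x + y else (0::complex)) = (if P then x else 0) + (if P then y else 0)" by simp
lemma mult_if0: "(y::complex) * (if P then x else 0) = (if P then x * y else 0)" by simp
lemma mult_if0': "(y::complex) * (if P then x else 0) = (if P then y * x else 0)" by simp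
lemma fun_if0: "f i * (if i = X then y else 0) = (if i = X then f X * y else (0::complex))" by simp
lemma if0_0: "(if P then 0 else (0::complex)) = 0" by simp

lemma mmul_tri:
  assumes D: "0 < D"
  shows "mmul D (penta D a1 b1 c1 (\<lambda>_. 0) (\<lambda>_. 0)) (penta D a2 b2 c2 (\<lambda>_. 0) (\<lambda>_. 0)) =
    penta D (\<lambda>j. a1 j * a2 j + c1 (sD D j) * b2 j + b1 (pD D j) * c2 j)
            (\<lambda>j. b1 j * a2 j + a1 (sD D j) * b2 j)
            (\<lambda>j. c1 j * a2 j + a1 (pD D j) * c2 j)
            (\<lambda>j. b1 (sD D j) * b2 j)
            (\<lambda>j. c1 (pD D j) * c2 j)" (is "mmul D ?A ?B = ?R")
proof (intro ext)
  fix i j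
  show "mmul D ?A ?B i j = ?R i j"
  proof (cases "i < D \<and> j < D")
    case False
    have "mmul D ?A ?B i j = 0" unfolding mmul_def
      by (rule sum.neutral) (use False in \<open>auto simp: penta_def split del: if_split\<close>)
    moreover have "?R i j = 0" using False unfolding penta_def by (auto split del: if_split)
    ultimately show ?thesis by simp
  next
    case True
    have "mmul D ?A (penta D a2 b2 c2 (\<lambda>_. 0) (\<lambda>_. 0)) i j =
       (\<Sum>l<D. (if l = j then ?A i l * a2 j else 0) + (if l = sD D j then ?A i l * b2 j else 0)
          + (if l = pD D j then ?A i l * c2 j else 0))"
      unfolding mmul_def by (rule sum.cong) (use True in \<open>simp_all add: penta_def[of D a2 b2 c2] if0_add if0_mult mult_if0' distrib_left distrib_right split del: if_split\<close>)
    also have "\<dots> = ?A i j * a2 j + ?A i (sD D j) * b2 j + ?A i (pD D j) * c2 j"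
      using True D by (simp add: sum.distrib)
    also have "\<dots> = ?R i j"
    proof -
      have Aj: "?A i j = (if i = j then a1 j else 0) + (if i = sD D j then b1 j else 0) + (if i = pD D j then c1 j else 0)"
        using True D unfolding penta_def by (simp split del: if_split)
      have As: "?A i (sD D j) = (if i = sD D j then a1 (sD D j) else 0) + (if i = sD D (sD D j) then b1 (sD D j) else 0) + (if i = j then c1 (sD D j) else 0)"
        using True D unfolding penta_def by (simp split del: if_split)
      have Ap: "?A i (pD D j) = (if i = pD D j then a1 (pD D j) else 0) + (if i = j then b1 (pD D j) else 0) + (if i = pD D (pD D j) then c1 (pD D j) else 0)"
        using True D unfolding penta_def by (simp split del: if_split)
      have R: "?R i j = (if i = j then a1 j * a2 j + c1 (sD D j) * b2 j + b1 (pD D j) * c2 j else 0)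
          + (if i = sD D j then b1 j * a2 j + a1 (sD D j) * b2 j else 0)
          + (if i = pD D j then c1 j * a2 j + a1 (pD D j) * c2 j else 0)
          + (if i = sD D (sD D j) then b1 (sD D j) * b2 j else 0)
          + (if i = pD D (pD D j) then c1 (pD D j) * c2 j else 0)"
        using True D unfolding penta_def by (simp split del: if_split)
      show ?thesis unfolding Aj As Ap R
        by (simp only: distrib_left distrib_right mult_if0 if0_mult if0_add add_ac)
    qed
    finally show ?thesis .
  qed
qed

lemma mmul_diag:
  assumes D: "0 < D"
  shows "mmul D (penta D a1 (\<lambda>_. 0) (\<lambda>_. 0) (\<lambda>_. 0) (\<lambda>_. 0)) (penta D a b c d e) =
    penta D (\<lambda>j. a1 j * a j) (\<lambda>j. a1 (sD D j) * b j) (\<lambda>j. a1 (pD D j) * c j)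
            (\<lambda>j. a1 (sD D (sD D j)) * d j) (\<lambda>j. a1 (pD D (pD D j)) * e j)" (is "mmul D ?A ?B = ?R")
proof (intro ext)
  fix i j
  show "mmul D ?A ?B i j = ?R i j"
  proof (cases "i < D \<and> j < D")
    case False
    have "mmul D ?A ?B i j = 0" unfolding mmul_def
      by (rule sum.neutral) (use False in \<open>auto simp: penta_def split del: if_split\<close>)
    moreover have "?R i j = 0" using False unfolding penta_def by (auto split del: if_split)
    ultimately show ?thesis by simp
  next
    case True
    have "mmul D (penta D a1 (\<lambda>_. 0) (\<lambda>_. 0) (\<lambda>_. 0) (\<lambda>_. 0)) (penta D a b c d e) i j =
       (\<Sum>l<D. if i = l then a1 i * penta D a b c d e l j else 0)"
      unfolding mmul_def
    proof (rule sum.cong)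
      fix l assume "l \<in> {..<D}"
      then show "?A i l * ?B l j = (if i = l then a1 i * ?B l j else 0)"
        using True by (cases "i = l") (simp_all add: penta_def[of D a1])
    qed simp
    also have "\<dots> = a1 i * penta D a b c d e i j" using True by simp
    also have "\<dots> = ?R i j"
      using True D unfolding penta_def by (simp add: distrib_left fun_if0[of a1] split del: if_split)
    finally show ?thesis .
  qed
qed

abbreviation "zz \<equiv> (\<lambda>_::nat. 0::complex)"

lemma meq_refl: "meq D A A" by (simp add: meq_def)
lemma meq_sym: "meq D A B \<Longrightarrow> meq D B A" by (simp add: meq_def)
lemma meq_trans: "meq D A B \<Longrightarrow> meq D B C \<Longrightarrow> meq D A C" by (simp add: meq_def)
lemma meq_mmul: "meq D A A' \<Longrightarrow> meq D B B' \<Longrightarrow> meq D (mmul D A B) (mmul D A' B')"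
  unfolding meq_def mmul_def by (auto intro!: sum.cong)
lemma meq_madd: "meq D A A' \<Longrightarrow> meq D B B' \<Longrightarrow> meq D (madd A B) (madd A' B')"
  unfolding meq_def madd_def by auto
lemma meq_msmult: "meq D A A' \<Longrightarrow> meq D (msmult c A) (msmult c A')"
  unfolding meq_def msmult_def by auto
lemma meq_eq: "A = B \<Longrightarrow> meq D A B" by (simp add: meq_def)

lemma if_add_same: "(if P then x else 0) + (if P then y else 0) = (if P then x + y else (0::complex))" by simp

lemma madd_penta: "madd (penta D a b c d e) (penta D a' b' c' d' e') =
   penta D (\<lambda>j. a j + a' j) (\<lambda>j. b j + b' j) (\<lambda>j. c j + c' j) (\<lambda>j. d j + d' j) (\<lambda>j. e j + e' j)"
proof (intro ext)
  fix i j
  show "madd (penta D a b c d e) (penta D a' b' c' d' e') i j = penta D (\<lambda>j. a j + a' j) (\<lambda>j. b j + b' j) (\<lambda>j. c j + c' j) (\<lambda>j. d j + d' j) (\<lambda>j. e j + e' j) i j"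
    by (cases "i < D \<and> j < D") (simp_all only: madd_def penta_def if_True if_False if0_add add_ac add_0_left)
qed

lemma msmult_penta: "msmult k (penta D a b c d e) =
   penta D (\<lambda>j. k * a j) (\<lambda>j. k * b j) (\<lambda>j. k * c j) (\<lambda>j. k * d j) (\<lambda>j. k * e j)"
proof (intro ext)
  fix i j
  show "msmult k (penta D a b c d e) i j = penta D (\<lambda>j. k * a j) (\<lambda>j. k * b j) (\<lambda>j. k * c j) (\<lambda>j. k * d j) (\<lambda>j. k * e j) i j"
    by (cases "i < D \<and> j < D") (simp_all only: msmult_def penta_def if_True if_False distrib_left mult_if0' mult_zero_right)
qed

lemma penta_cong:
  assumes "\<And>j. j < D \<Longrightarrow> a j = a' j" "\<And>j. j < D \<Longrightarrow> b j = b' j" "\<And>j. j < D \<Longrightarrow> c j = c' j"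
    "\<And>j. j < D \<Longrightarrow> d j = d' j" "\<And>j. j < D \<Longrightarrow> e j = e' j"
  shows "penta D a b c d e = penta D a' b' c' d' e'"
proof (intro ext)
  fix i j
  show "penta D a b c d e i j = penta D a' b' c' d' e' i j"
  proof (cases "i < D \<and> j < D")
    case True then show ?thesis using assms unfolding penta_def by simp
  next
    case False then show ?thesis unfolding penta_def by (simp only: if_not_P[OF False] if_False)
  qed
qed

lemma mid_penta: "meq D mid (penta D (\<lambda>_. 1) zz zz zz zz)"
  unfolding meq_def mid_def penta_def by simp

lemma rho0_penta: "meq D (rho0 D q \<sigma>) (penta D (\<lambda>j. lam q \<sigma> (int j)) zz zz zz zz)"
  unfolding meq_def rho0_def penta_def by simp

lemma rhoInf_penta: "0 < D \<Longrightarrow> meq D (rhoInf D s t) (penta D zz s (\<lambda>j. t (pD D j)) zz zz)"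
  unfolding meq_def rhoInf_def penta_def sD_def[symmetric]
  by (auto simp: eq_sD_iff cong: if_cong split del: if_split)

lemma rho1_penta: "0 < D \<Longrightarrow> meq D (rho1 D q \<sigma> s t)
   (penta D zz (\<lambda>j. q powi (2 * int j + 1) * \<sigma> * s j) (\<lambda>j. q powi (-2 * int j + 1) * inverse \<sigma> * t (pD D j)) zz zz)"
  unfolding meq_def rho1_def penta_def sD_def[symmetric]
  by (auto simp: eq_sD_iff cong: if_cong split del: if_split)

lemma nat_2induct: "P 0 \<Longrightarrow> P (Suc 0) \<Longrightarrow> (\<And>k. P k \<Longrightarrow> P (Suc k) \<Longrightarrow> P (Suc (Suc k))) \<Longrightarrow> P n"
proof -
  assume 0: "P 0" and 1: "P (Suc 0)" and S: "\<And>k. P k \<Longrightarrow> P (Suc k) \<Longrightarrow> P (Suc (Suc k))"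
  have "P n \<and> P (Suc n)" by (induction n) (use 0 1 S in auto)
  then show "P n" by simp
qed

fun chebs :: "nat \<Rightarrow> complex \<Rightarrow> complex" where
  "chebs 0 x = 2"
| "chebs (Suc 0) x = x"
| "chebs (Suc (Suc k)) x = x * chebs (Suc k) x - chebs k x"

lemma chebs_u: "u \<noteq> 0 \<Longrightarrow> chebs k (u + inverse u) = u ^ k + inverse u ^ k"
  by (induction k rule: nat_2induct) (auto simp: field_simps power2_eq_square)

lemma cheb_penta:
  assumes D: "0 < D" and A: "meq D A (penta D a zz zz zz zz)"
  shows "meq D (cheb_mat D k A) (penta D (\<lambda>j. chebs k (a j)) zz zz zz zz)"
proof (induction k rule: nat_2induct)
  case 1
  have "meq D (msmult 2 mid) (msmult 2 (penta D (\<lambda>_. 1) zz zz zz zz))"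
    by (rule meq_msmult[OF mid_penta])
  then show ?case by (simp add: msmult_penta)
next
  case 2
  then show ?case using A by simp
next
  case (3 k)
  have "meq D (cheb_mat D (Suc (Suc k)) A)
     (madd (mmul D (penta D a zz zz zz zz) (penta D (\<lambda>j. chebs (Suc k) (a j)) zz zz zz zz))
        (msmult (-1) (penta D (\<lambda>j. chebs k (a j)) zz zz zz zz)))"
    unfolding cheb_mat.simps
    by (intro meq_madd meq_mmul meq_msmult A) (use 3 in auto)
  also have "madd (mmul D (penta D a zz zz zz zz) (penta D (\<lambda>j. chebs (Suc k) (a j)) zz zz zz zz))
        (msmult (-1) (penta D (\<lambda>j. chebs k (a j)) zz zz zz zz)) =
     penta D (\<lambda>j. chebs (Suc (Suc k)) (a j)) zz zz zz zz"
    unfolding mmul_diag[OF D] msmult_penta madd_penta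
    by (rule penta_cong) auto
  finally show ?case .
qed

lemma ordq2_facts:
  assumes "root_of_unity q"
  shows "0 < ordq2 q" "(q^2)^(ordq2 q) = 1" "q \<noteq> 0"
proof -
  obtain m :: nat where m: "m > 0" "q ^ m = 1" using assms unfolding root_of_unity_def by auto
  have ex: "\<exists>k::nat. k > 0 \<and> (q^2)^k = 1"
    using m by (intro exI[of _ m]) (simp add: power_mult[symmetric] mult.commute power_mult)
  have "0 < ordq2 q \<and> (q^2)^(ordq2 q) = 1"
    unfolding ordq2_def by (rule LeastI_ex[OF ex])
  then show "0 < ordq2 q" "(q^2)^(ordq2 q) = 1" by auto
  show "q \<noteq> 0" using m by (metis power_0_left less_not_refl zero_neq_one)
qed

lemma pw_shift:
  fixes q :: complex
  assumes "q \<noteq> 0" "(q^2)^D = 1"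
  shows "q powi (e + 2 * int D * z) = q powi e"
proof -
  have "q powi (2 * int D) = 1"
  proof -
    have "q powi (2 * int D) = q powi (int (2 * D))" by simp
    also have "\<dots> = q ^ (2 * D)" by (rule power_int_of_nat)
    also have "\<dots> = (q^2)^D" by (simp add: power_mult)
    finally show ?thesis using assms by simp
  qed
  then have "q powi (2 * int D * z) = 1" by (simp add: power_int_mult)
  then show ?thesis using assms by (simp add: power_int_add)
qed

lemma pw_shift': "(q::complex) \<noteq> 0 \<Longrightarrow> (q^2)^D = 1 \<Longrightarrow> e' = e + 2 * int D * z \<Longrightarrow> q powi e' = q powi e"
  using pw_shift by blast

lemma lam_per: "(q::complex) \<noteq> 0 \<Longrightarrow> (q^2)^D = 1 \<Longrightarrow> lam q \<sigma> (k + int D) = lam q \<sigma> k"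
proof -
  assume a: "q \<noteq> 0" "(q^2)^D = 1"
  have e1: "q powi (2 * (k + int D)) = q powi (2 * k)" by (rule pw_shift'[OF a, of _ _ 1]) simp
  have e2: "q powi (-2 * (k + int D)) = q powi (-2 * k)" by (rule pw_shift'[OF a, of _ _ "-1"]) simp
  show ?thesis unfolding lam_def e1 e2 by (rule refl)
qed

lemma lamhat_per: "(q::complex) \<noteq> 0 \<Longrightarrow> (q^2)^D = 1 \<Longrightarrow> lamhat q \<sigma> (k + int D) = lamhat q \<sigma> k"
proof -
  assume a: "q \<noteq> 0" "(q^2)^D = 1"
  have e1: "q powi (2 * (k + int D)) = q powi (2 * k)" by (rule pw_shift'[OF a, of _ _ 1]) simp
  have e2: "q powi (-2 * (k + int D)) = q powi (-2 * k)" by (rule pw_shift'[OF a, of _ _ "-1"]) simp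
  show ?thesis unfolding lamhat_def e1 e2 by (rule refl)
qed

lemma r_per: "(q::complex) \<noteq> 0 \<Longrightarrow> (q^2)^D = 1 \<Longrightarrow> r_coef q \<sigma> w (k + int D) = r_coef q \<sigma> w k"
proof -
  assume a: "q \<noteq> 0" "(q^2)^D = 1"
  have e1: "lamhat q \<sigma> (k + int D + 1) = lamhat q \<sigma> (k + 1)"
    using lamhat_per[OF a, of \<sigma> "k+1"] by (simp add: ac_simps)
  have e2: "q powi (4 * (k + int D) + 2) = q powi (4 * k + 2)" by (rule pw_shift'[OF a, of _ _ 2]) simp
  have e3: "q powi (-4 * (k + int D) - 2) = q powi (-4 * k - 2)" by (rule pw_shift'[OF a, of _ _ "-2"]) simp
  show ?thesis unfolding r_coef_def e1 e2 e3 lamhat_per[OF a] by (rule refl)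
qed

lemma sD_int:
  assumes per: "\<And>k. f (k + int D) = f k" and D: "0 < D" and j: "j < D"
  shows "f (int (sD D j)) = f (int j + 1)"
proof (cases "j + 1 < D")
  case True
  then show ?thesis unfolding sD_def by (simp add: ac_simps)
next
  case False
  then have "j + 1 = D" using j by simp
  then have "sD D j = 0" unfolding sD_def by simp
  then show ?thesis using per[of 0] \<open>j + 1 = D\<close> by (metis add_0 of_nat_0 of_nat_Suc Suc_eq_plus1 add.commute)
qed

lemma pD_int:
  assumes per: "\<And>k. f (k + int D) = f k" and D: "0 < D" and j: "j < D"
  shows "f (int (pD D j)) = f (int j - 1)"
proof (cases j)
  case 0
  then have "pD D j = D - 1" unfolding pD_def using D by simp
  then show ?thesis using per[of "-1"] 0 D by (simp add: of_nat_diff)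
next
  case (Suc m)
  then have "pD D j = m" unfolding pD_def using j by simp
  then show ?thesis using Suc by simp
qed

context
  fixes q :: complex and D :: nat
  assumes qnz: "q \<noteq> 0" and qD: "(q^2)^D = 1" and Dpos: "0 < D"
begin

lemma lam_sD: "j < D \<Longrightarrow> lam q \<sigma> (int (sD D j)) = lam q \<sigma> (int j + 1)"
  by (rule sD_int[OF _ Dpos]) (simp add: lam_per[OF qnz qD])
lemma lam_per_c: "lam q \<sigma> (k + int D + c) = lam q \<sigma> (k + c)"
  using lam_per[OF qnz qD, of \<sigma> "k + c"] by (simp add: ac_simps)
lemma lam_sD': "j < D \<Longrightarrow> lam q \<sigma> (int (sD D j) + c) = lam q \<sigma> (int j + 1 + c)"
  using sD_int[OF _ Dpos, of "\<lambda>k. lam q \<sigma> (k + c)"] lam_per_c by simp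
lemma lam_pD: "j < D \<Longrightarrow> lam q \<sigma> (int (pD D j)) = lam q \<sigma> (int j - 1)"
  by (rule pD_int[OF _ Dpos]) (simp add: lam_per[OF qnz qD])
lemma lam_pD': "j < D \<Longrightarrow> lam q \<sigma> (int (pD D j) + c) = lam q \<sigma> (int j - 1 + c)"
  using pD_int[OF _ Dpos, of "\<lambda>k. lam q \<sigma> (k + c)"] lam_per_c by simp
lemma r_pD: "j < D \<Longrightarrow> r_coef q \<sigma> w (int (pD D j)) = r_coef q \<sigma> w (int j - 1)"
  by (rule pD_int[OF _ Dpos]) (simp add: r_per[OF qnz qD])

lemma pw_per2: "q powi (m * (k + int D) + c) = q powi (m * k + c)" if "even m"
proof -
  obtain n where "m = 2 * n" using \<open>even m\<close> by (auto elim: evenE)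
  then show ?thesis by (intro pw_shift'[OF qnz qD, of _ _ n]) (simp add: algebra_simps)
qed

lemma pw_sD: "j < D \<Longrightarrow> even m \<Longrightarrow> q powi (m * int (sD D j) + c) = q powi (m * (int j + 1) + c)"
  using sD_int[OF _ Dpos, of "\<lambda>k. q powi (m * k + c)"] pw_per2 by simp
lemma pw_pD: "j < D \<Longrightarrow> even m \<Longrightarrow> q powi (m * int (pD D j) + c) = q powi (m * (int j - 1) + c)"
  using pD_int[OF _ Dpos, of "\<lambda>k. q powi (m * k + c)"] pw_per2 by simp

end

lemma lamhat_nz:
  assumes gen: "general_sigma q \<sigma>" and qnz: "q \<noteq> 0" and qD: "(q^2)^(ordq2 q) = 1"
  shows "lamhat q \<sigma> k \<noteq> 0"
proof
  assume h: "lamhat q \<sigma> k = 0"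
  define D where "D = ordq2 q"
  have snz: "\<sigma> \<noteq> 0" using gen unfolding general_sigma_def by auto
  define u where "u = q powi (2 * k) * \<sigma>"
  have unz: "u \<noteq> 0" using snz qnz unfolding u_def by simp
  have e: "q powi (-2 * k) * inverse \<sigma> = inverse u"
    unfolding u_def by (simp add: power_int_minus[symmetric])
  have "lamhat q \<sigma> k = u - inverse u" unfolding lamhat_def e u_def by (rule refl)
  then have "u - inverse u = 0" using h by simp
  then have "u * u = 1" using unz by (simp add: field_simps)
  then have u1: "u = 1 \<or> u = -1"
    by (metis (no_types, lifting) add.inverse_inverse minus_mult_minus mult_cancel_right1 square_eq_1_iff)
  have "(q powi (2 * k)) ^ D = 1"
  proof -
    have "(q powi (2 * k)) ^ D = q powi (2 * k * int D)" by (simp add: power_int_power')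
    also have "\<dots> = (q powi (2 * int D)) powi k" by (simp add: power_int_mult[symmetric] ac_simps)
    also have "q powi (2 * int D) = 1"
    proof -
      have "q powi (2 * int D) = q powi (int (2 * D))" by simp
      also have "\<dots> = q ^ (2 * D)" by (rule power_int_of_nat)
      also have "\<dots> = (q^2)^D" by (simp add: power_mult)
      finally show ?thesis using qD unfolding D_def by simp
    qed
    finally show ?thesis by simp
  qed
  then have uD: "u ^ D = \<sigma> ^ D" unfolding u_def by (simp add: power_mult_distrib)
  have z: "z0 D \<sigma> = \<sigma> ^ D + inverse (\<sigma> ^ D)" unfolding z0_def by (simp add: power_inverse)
  from u1 show False
  proof
    assume "u = 1"
    then have "\<sigma> ^ D = 1" using uD by simp
    then have "z0 D \<sigma> = 2" using z by simp
    then show False using gen unfolding general_sigma_def D_def by auto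
  next
    assume "u = -1"
    then have sD: "\<sigma> ^ D = (-1) ^ D" using uD by simp
    show False
    proof (cases "even D")
      case True
      then have "z0 D \<sigma> = 2" using z sD by simp
      then show False using gen unfolding general_sigma_def D_def by auto
    next
      case False
      then have "z0 D \<sigma> = -2" using z sD by simp
      then show False using gen False unfolding general_sigma_def D_def by auto
    qed
  qed
qed

lemma pw4: "(q::complex) \<noteq> 0 \<Longrightarrow> q powi (k * 4) = q powi (k * 2) * q powi (k * 2)"
proof -
  assume "q \<noteq> 0"
  have "q powi (k * 2 + k * 2) = q powi (k * 2) * q powi (k * 2)"
    by (rule power_int_add) (simp add: \<open>q \<noteq> 0\<close>)
  moreover have "k * 2 + k * 2 = k * 4" by simp
  ultimately show ?thesis by metis
qed

lemma N_eq:
  fixes q \<sigma> :: complex and k :: int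
  assumes qnz: "q \<noteq> 0" and snz: "\<sigma> \<noteq> 0"
  shows "(w + q powi (4*k+2) * \<sigma>\<^sup>2 + q powi (-4*k-2) * inverse (\<sigma>\<^sup>2))
       - (w + q powi (4*(k-1)+2) * \<sigma>\<^sup>2 + q powi (-4*(k-1)-2) * inverse (\<sigma>\<^sup>2))
       = (q^2 - inverse (q^2)) * lam q \<sigma> k * lamhat q \<sigma> k"
  unfolding lam_def lamhat_def
  apply (simp add: power_int_add power_int_diff power_int_minus algebra_simps qnz snz pw4)
  apply (simp add: field_simps qnz snz)
  apply algebra?
  done


lemma diag3_int:
  fixes q \<sigma> :: complex and k :: int
  assumes qnz: "q \<noteq> 0" and snz: "\<sigma> \<noteq> 0" and lnz: "\<And>k. lamhat q \<sigma> k \<noteq> 0"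
  shows "r_coef q \<sigma> w k * lamhat q \<sigma> (k+1) - r_coef q \<sigma> w (k-1) * lamhat q \<sigma> (k-1)
     = (q^2 - inverse (q^2)) * lam q \<sigma> k"
proof -
  define N0 where "N0 = w + q powi (4*k+2) * \<sigma>\<^sup>2 + q powi (-4*k-2) * inverse (\<sigma>\<^sup>2)"
  define N1 where "N1 = w + q powi (4*(k-1)+2) * \<sigma>\<^sup>2 + q powi (-4*(k-1)-2) * inverse (\<sigma>\<^sup>2)"
  have e1: "r_coef q \<sigma> w k * lamhat q \<sigma> (k+1) = N0 / lamhat q \<sigma> k"
    unfolding r_coef_def N0_def using lnz[of "k+1"] lnz[of k] by (simp add: field_simps)
  have e2: "r_coef q \<sigma> w (k-1) * lamhat q \<sigma> (k-1) = N1 / lamhat q \<sigma> k"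
    unfolding r_coef_def N1_def using lnz[of "k-1"] lnz[of k] by (simp add: field_simps)
  have e3: "N0 - N1 = (q^2 - inverse (q^2)) * lam q \<sigma> k * lamhat q \<sigma> k"
    unfolding N0_def N1_def by (rule N_eq[OF qnz snz])
  have "N0 / lamhat q \<sigma> k - N1 / lamhat q \<sigma> k = (N0 - N1) / lamhat q \<sigma> k"
    by (simp add: diff_divide_distrib)
  then show ?thesis unfolding e1 e2 e3 using lnz[of k] by simp
qed

lemma X_eq:
  fixes q \<sigma> :: complex and k :: int
  assumes qnz: "q \<noteq> 0" and snz: "\<sigma> \<noteq> 0"
  shows "(w + q powi (4*k+2) * \<sigma>\<^sup>2 + q powi (-4*k-2) * inverse (\<sigma>\<^sup>2)) * (q powi (2*k) * \<sigma>)
     - (w + q powi (4*(k-1)+2) * \<sigma>\<^sup>2 + q powi (-4*(k-1)-2) * inverse (\<sigma>\<^sup>2)) * inverse (q powi (2*k) * \<sigma>)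
     + (- (q^2) * (lam q \<sigma> k)^2 + q^2 + inverse (q^2)) * lamhat q \<sigma> k = w * lamhat q \<sigma> k"
  unfolding lam_def lamhat_def
  apply (simp add: power_int_add power_int_diff power_int_minus algebra_simps qnz snz pw4)
  apply (simp add: field_simps qnz snz)
  apply algebra?
  done

lemma periph_int:
  fixes q \<sigma> :: complex and k :: int
  assumes qnz: "q \<noteq> 0" and snz: "\<sigma> \<noteq> 0" and lnz: "\<And>k. lamhat q \<sigma> k \<noteq> 0"
  shows "r_coef q \<sigma> w k * (q powi (2*k+2) * \<sigma> * lam q \<sigma> k - q^2 - inverse (q^2))
     + r_coef q \<sigma> w (k-1) * (q powi (2-2*k) * inverse \<sigma> * lam q \<sigma> k - q^2 - inverse (q^2))
     - q^2 * (lam q \<sigma> k)^2 + q^2 + inverse (q^2) = w"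
proof -
  define u where "u = q powi (2*k) * \<sigma>"
  define N0 where "N0 = w + q powi (4*k+2) * \<sigma>\<^sup>2 + q powi (-4*k-2) * inverse (\<sigma>\<^sup>2)"
  define N1 where "N1 = w + q powi (4*(k-1)+2) * \<sigma>\<^sup>2 + q powi (-4*(k-1)-2) * inverse (\<sigma>\<^sup>2)"
  have x1: "q powi (2*k+2) * \<sigma> * lam q \<sigma> k - q^2 - inverse (q^2) = u * lamhat q \<sigma> (k+1)"
    unfolding u_def lam_def lamhat_def
    apply (simp add: power_int_add power_int_diff power_int_minus algebra_simps qnz snz pw4)
    apply (simp add: field_simps qnz snz)
    apply algebra?
    done
  have x2: "q powi (2-2*k) * inverse \<sigma> * lam q \<sigma> k - q^2 - inverse (q^2) = - inverse u * lamhat q \<sigma> (k-1)"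
    unfolding u_def lam_def lamhat_def
    apply (simp add: power_int_add power_int_diff power_int_minus algebra_simps qnz snz pw4)
    apply (simp add: field_simps qnz snz)
    apply algebra?
    done
  have unz: "u \<noteq> 0" unfolding u_def using qnz snz by simp
  have e1: "r_coef q \<sigma> w k * (u * lamhat q \<sigma> (k+1)) = N0 * u / lamhat q \<sigma> k"
    unfolding r_coef_def N0_def using lnz[of "k+1"] lnz[of k] by (simp add: field_simps)
  have e2: "r_coef q \<sigma> w (k-1) * (- inverse u * lamhat q \<sigma> (k-1)) = - N1 * inverse u / lamhat q \<sigma> k"
    unfolding r_coef_def N1_def using lnz[of "k-1"] lnz[of k] unz by (simp add: field_simps)
  have e3: "N0 * u - N1 * inverse u + (- (q^2) * (lam q \<sigma> k)^2 + q^2 + inverse (q^2)) * lamhat q \<sigma> k = w * lamhat q \<sigma> k"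
    unfolding N0_def N1_def u_def by (rule X_eq[OF qnz snz])
  have lk: "lamhat q \<sigma> k \<noteq> 0" by (rule lnz)
  have "N0 * u / lamhat q \<sigma> k + - N1 * inverse u / lamhat q \<sigma> k - q^2 * (lam q \<sigma> k)^2 + q^2 + inverse (q^2) = w"
  proof -
    have "N0 * u / lamhat q \<sigma> k + - N1 * inverse u / lamhat q \<sigma> k - q^2 * (lam q \<sigma> k)^2 + q^2 + inverse (q^2)
      = (N0 * u - N1 * inverse u + (- (q^2) * (lam q \<sigma> k)^2 + q^2 + inverse (q^2)) * lamhat q \<sigma> k) / lamhat q \<sigma> k"
      using lk by (simp add: field_simps)
    also have "\<dots> = w" unfolding e3 using lk by simp
    finally show ?thesis .
  qed
  then show ?thesis unfolding x1 x2 e1 e2 by simp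
qed

lemma meq_via: "meq D X X' \<Longrightarrow> meq D Y Y' \<Longrightarrow> X' = Y' \<Longrightarrow> meq D X Y"
  unfolding meq_def by auto

lemma even_m2: "even (2::int)" "even (-2::int)" by auto

theorem mainTheorem5:
  fixes q \<sigma> w :: complex and s t :: "nat \<Rightarrow> complex"
  assumes "root_of_unity q"
    and "q ^ 4 \<noteq> 1"
    and "general_sigma q \<sigma>"
    and "(s, t) \<in> E0 q \<sigma> w"
  shows "skein_rels (ordq2 q) q (rho0 (ordq2 q) q \<sigma>) (rho1 (ordq2 q) q \<sigma> s t) (rhoInf (ordq2 q) s t)
       \<and> meq (ordq2 q) (cheb_mat (ordq2 q) (ordq2 q) (rho0 (ordq2 q) q \<sigma>))
              (msmult (z0 (ordq2 q) \<sigma>) mid)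
       \<and> meq (ordq2 q) (periph (ordq2 q) q (rho0 (ordq2 q) q \<sigma>) (rho1 (ordq2 q) q \<sigma> s t) (rhoInf (ordq2 q) s t))
              (msmult w mid)"
proof -
  define D where "D = ordq2 q"
  have Dpos: "0 < D" and qD: "(q^2)^D = 1" and qnz: "q \<noteq> 0"
    using ordq2_facts[OF assms(1)] unfolding D_def by auto
  have snz: "\<sigma> \<noteq> 0" using assms(3) unfolding general_sigma_def by auto
  have lnz: "\<And>k. lamhat q \<sigma> k \<noteq> 0"
    using lamhat_nz[OF assms(3) qnz] qD unfolding D_def by auto
  have st: "\<And>i. i < D \<Longrightarrow> s i * t i = r_coef q \<sigma> w (int i)"
    using assms(4) unfolding E0_def D_def by auto
  define L where "L = (\<lambda>j::nat. lam q \<sigma> (int j))"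
  define B where "B = (\<lambda>j::nat. q powi (2 * int j + 1) * \<sigma> * s j)"
  define C where "C = (\<lambda>j::nat. q powi (-2 * int j + 1) * inverse \<sigma> * t (pD D j))"
  define T where "T = (\<lambda>j::nat. t (pD D j))"
  have A0: "meq D (rho0 D q \<sigma>) (penta D L zz zz zz zz)" unfolding L_def by (rule rho0_penta)
  have AI: "meq D (rhoInf D s t) (penta D zz s T zz zz)" unfolding T_def by (rule rhoInf_penta[OF Dpos])
  have A1: "meq D (rho1 D q \<sigma> s t) (penta D zz B C zz zz)" unfolding B_def C_def by (rule rho1_penta[OF Dpos])
  have lam_pDm: "\<And>j. j < D \<Longrightarrow> lam q \<sigma> (int (pD D j) - 1) = lam q \<sigma> (int j - 1 - 1)"
    using lam_pD'[OF qnz qD Dpos, of _ \<sigma> "-1"] by simp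
  note shifts = lam_pDm lam_sD[OF qnz qD Dpos] lam_sD'[OF qnz qD Dpos] lam_pD[OF qnz qD Dpos] lam_pD'[OF qnz qD Dpos]
     pw_sD[OF qnz qD Dpos] pw_pD[OF qnz qD Dpos] r_pD[OF qnz qD Dpos] even_m2

  have key3: "\<And>j. j < D \<Longrightarrow> (s j * t j) * lamhat q \<sigma> (int j + 1) - (s (pD D j) * t (pD D j)) * lamhat q \<sigma> (int j - 1)
      = (q^2 - inverse (q^2)) * lam q \<sigma> (int j)"
    using st st[OF pD_lt[OF Dpos]] r_pD[OF qnz qD Dpos] diag3_int[OF qnz snz lnz] by simp
  have keyP: "\<And>j. j < D \<Longrightarrow> (s j * t j) * (q powi (2 * int j + 2) * \<sigma> * lam q \<sigma> (int j) - q^2 - inverse (q^2))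
     + (s (pD D j) * t (pD D j)) * (q powi (2 - 2 * int j) * inverse \<sigma> * lam q \<sigma> (int j) - q^2 - inverse (q^2))
     - q^2 * (lam q \<sigma> (int j))^2 + q^2 + inverse (q^2) = w"
    using st st[OF pD_lt[OF Dpos]] r_pD[OF qnz qD Dpos] periph_int[OF qnz snz lnz] by simp
  have R1: "meq D (madd (msmult q (mmul D (rho0 D q \<sigma>) (rhoInf D s t))) (msmult (- inverse q) (mmul D (rhoInf D s t) (rho0 D q \<sigma>))))
           (msmult (q^2 - inverse (q^2)) (rho1 D q \<sigma> s t))"
  proof (rule meq_via)
    show "meq D (madd (msmult q (mmul D (rho0 D q \<sigma>) (rhoInf D s t))) (msmult (- inverse q) (mmul D (rhoInf D s t) (rho0 D q \<sigma>))))
      (madd (msmult q (mmul D (penta D L zz zz zz zz) (penta D zz s T zz zz))) (msmult (- inverse q) (mmul D (penta D zz s T zz zz) (penta D L zz zz zz zz))))"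
      by (intro meq_madd meq_msmult meq_mmul A0 AI A1)
    show "meq D (msmult (q^2 - inverse (q^2)) (rho1 D q \<sigma> s t)) (msmult (q^2 - inverse (q^2)) (penta D zz B C zz zz))"
      by (intro meq_madd meq_msmult meq_mmul A0 AI A1)
    show "madd (msmult q (mmul D (penta D L zz zz zz zz) (penta D zz s T zz zz))) (msmult (- inverse q) (mmul D (penta D zz s T zz zz) (penta D L zz zz zz zz)))
       = msmult (q^2 - inverse (q^2)) (penta D zz B C zz zz)"
      unfolding mmul_tri[OF Dpos] msmult_penta madd_penta
      apply (rule penta_cong)
      apply (simp_all only: L_def B_def C_def T_def shifts pD_sD sD_pD sD_lt pD_lt Dpos mult_1_right)
      apply (simp_all add: lamhat_def lam_def power_int_add power_int_diff power_int_minus algebra_simps qnz snz pw4)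
      apply (simp_all add: field_simps qnz snz)
      apply (algebra+)?
      done
  qed

  have R2: "meq D (madd (msmult q (mmul D (rho1 D q \<sigma> s t) (rho0 D q \<sigma>))) (msmult (- inverse q) (mmul D (rho0 D q \<sigma>) (rho1 D q \<sigma> s t))))
           (msmult (q^2 - inverse (q^2)) (rhoInf D s t))"
  proof (rule meq_via)
    show "meq D (madd (msmult q (mmul D (rho1 D q \<sigma> s t) (rho0 D q \<sigma>))) (msmult (- inverse q) (mmul D (rho0 D q \<sigma>) (rho1 D q \<sigma> s t))))
      (madd (msmult q (mmul D (penta D zz B C zz zz) (penta D L zz zz zz zz))) (msmult (- inverse q) (mmul D (penta D L zz zz zz zz) (penta D zz B C zz zz))))"
      by (intro meq_madd meq_msmult meq_mmul A0 AI A1)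
    show "meq D (msmult (q^2 - inverse (q^2)) (rhoInf D s t)) (msmult (q^2 - inverse (q^2)) (penta D zz s T zz zz))"
      by (intro meq_madd meq_msmult meq_mmul A0 AI A1)
    show "madd (msmult q (mmul D (penta D zz B C zz zz) (penta D L zz zz zz zz))) (msmult (- inverse q) (mmul D (penta D L zz zz zz zz) (penta D zz B C zz zz)))
       = msmult (q^2 - inverse (q^2)) (penta D zz s T zz zz)"
      unfolding mmul_tri[OF Dpos] msmult_penta madd_penta
      apply (rule penta_cong)
      apply (simp_all only: L_def B_def C_def T_def shifts pD_sD sD_pD sD_lt pD_lt Dpos mult_1_right)
      apply (simp_all add: lamhat_def lam_def power_int_add power_int_diff power_int_minus algebra_simps qnz snz pw4)
      apply (simp_all add: field_simps qnz snz)
      apply (algebra+)?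
      done
  qed
  have R3: "meq D (madd (msmult q (mmul D (rhoInf D s t) (rho1 D q \<sigma> s t))) (msmult (- inverse q) (mmul D (rho1 D q \<sigma> s t) (rhoInf D s t))))
           (msmult (q^2 - inverse (q^2)) (rho0 D q \<sigma>))"
  proof (rule meq_via)
    show "meq D (madd (msmult q (mmul D (rhoInf D s t) (rho1 D q \<sigma> s t))) (msmult (- inverse q) (mmul D (rho1 D q \<sigma> s t) (rhoInf D s t))))
      (madd (msmult q (mmul D (penta D zz s T zz zz) (penta D zz B C zz zz))) (msmult (- inverse q) (mmul D (penta D zz B C zz zz) (penta D zz s T zz zz))))"
      by (intro meq_madd meq_msmult meq_mmul A0 AI A1)
    show "meq D (msmult (q^2 - inverse (q^2)) (rho0 D q \<sigma>)) (msmult (q^2 - inverse (q^2)) (penta D L zz zz zz zz))"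
      by (intro meq_madd meq_msmult meq_mmul A0 AI A1)
    show "madd (msmult q (mmul D (penta D zz s T zz zz) (penta D zz B C zz zz))) (msmult (- inverse q) (mmul D (penta D zz B C zz zz) (penta D zz s T zz zz)))
       = msmult (q^2 - inverse (q^2)) (penta D L zz zz zz zz)"
      unfolding mmul_tri[OF Dpos] msmult_penta madd_penta
      apply (rule penta_cong)
      apply (simp_all only: L_def B_def C_def T_def shifts pD_sD sD_pD sD_lt pD_lt Dpos mult_1_right)
      subgoal premises p for j
        apply (rule trans[OF _ key3[OF p]])
          apply (simp_all add: lamhat_def lam_def power_int_add power_int_diff power_int_minus algebra_simps qnz snz pw4)
          apply (simp_all add: field_simps qnz snz)
          apply (algebra+)?
          done
      apply (simp_all add: lamhat_def lam_def power_int_add power_int_diff power_int_minus algebra_simps qnz snz pw4)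
      apply (simp_all add: field_simps qnz snz)
      apply (algebra+)?
      done
  qed
  have RP: "meq D (periph D q (rho0 D q \<sigma>) (rho1 D q \<sigma> s t) (rhoInf D s t)) (msmult w mid)"
    unfolding periph_def
  proof (rule meq_via)
    show "meq D (madd (msmult q (mmul D (rho0 D q \<sigma>) (mmul D (rhoInf D s t) (rho1 D q \<sigma> s t))))
     (madd (msmult (- q\<^sup>2) (mmul D (rho0 D q \<sigma>) (rho0 D q \<sigma>)))
       (madd (msmult (- q\<^sup>2) (mmul D (rho1 D q \<sigma> s t) (rho1 D q \<sigma> s t)))
         (madd (msmult (- inverse (q\<^sup>2)) (mmul D (rhoInf D s t) (rhoInf D s t)))
           (msmult (q\<^sup>2 + inverse (q\<^sup>2)) mid)))))
      (madd (msmult q (mmul D (penta D L zz zz zz zz) (mmul D (penta D zz s T zz zz) (penta D zz B C zz zz))))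
     (madd (msmult (- q\<^sup>2) (mmul D (penta D L zz zz zz zz) (penta D L zz zz zz zz)))
       (madd (msmult (- q\<^sup>2) (mmul D (penta D zz B C zz zz) (penta D zz B C zz zz)))
         (madd (msmult (- inverse (q\<^sup>2)) (mmul D (penta D zz s T zz zz) (penta D zz s T zz zz)))
           (msmult (q\<^sup>2 + inverse (q\<^sup>2)) (penta D (\<lambda>_. 1) zz zz zz zz))))))"
      by (intro meq_madd meq_msmult meq_mmul A0 AI A1 mid_penta)
    show "meq D (msmult w mid) (msmult w (penta D (\<lambda>_. 1) zz zz zz zz))"
      by (intro meq_msmult mid_penta)
    show "madd (msmult q (mmul D (penta D L zz zz zz zz) (mmul D (penta D zz s T zz zz) (penta D zz B C zz zz))))
     (madd (msmult (- q\<^sup>2) (mmul D (penta D L zz zz zz zz) (penta D L zz zz zz zz)))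
       (madd (msmult (- q\<^sup>2) (mmul D (penta D zz B C zz zz) (penta D zz B C zz zz)))
         (madd (msmult (- inverse (q\<^sup>2)) (mmul D (penta D zz s T zz zz) (penta D zz s T zz zz)))
           (msmult (q\<^sup>2 + inverse (q\<^sup>2)) (penta D (\<lambda>_. 1) zz zz zz zz))))) =
      msmult w (penta D (\<lambda>_. 1) zz zz zz zz)"
      unfolding mmul_tri[OF Dpos] mmul_diag[OF Dpos] msmult_penta madd_penta
      apply (rule penta_cong)
      apply (simp_all only: L_def B_def C_def T_def shifts pD_sD sD_pD sD_lt pD_lt Dpos mult_1_right)
      subgoal premises p for j
        apply (rule trans[OF _ keyP[OF p]])
          apply (simp_all add: lamhat_def lam_def power_int_add power_int_diff power_int_minus algebra_simps qnz snz pw4)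
          apply (simp_all add: field_simps qnz snz)
          apply (algebra+)?
          done
      apply (simp_all add: lamhat_def lam_def power_int_add power_int_diff power_int_minus algebra_simps qnz snz pw4)
      apply (simp_all add: field_simps qnz snz)
      apply (algebra+)?
      done
  qed
  have chebL: "\<And>j. chebs D (lam q \<sigma> (int j)) = z0 D \<sigma>"
  proof -
    fix j :: nat
    define u where "u = q powi (2 * int j) * \<sigma>"
    have unz: "u \<noteq> 0" unfolding u_def using qnz snz by simp
    have "lam q \<sigma> (int j) = u + inverse u"
      unfolding lam_def u_def by (simp add: power_int_minus[symmetric])
    then have "chebs D (lam q \<sigma> (int j)) = u ^ D + inverse u ^ D" using chebs_u[OF unz] by simp
    moreover have "(q powi (2 * int j)) ^ D = 1"
    proof -
      have "(q powi (2 * int j)) ^ D = q powi (2 * int j * int D)" by (simp add: power_int_power')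
      also have "\<dots> = (q powi (2 * int D)) powi (int j)"
        by (subst power_int_mult[symmetric]) (simp add: ac_simps)
      also have "q powi (2 * int D) = 1"
      proof -
        have "q powi (2 * int D) = q powi (int (2 * D))" by simp
        also have "\<dots> = q ^ (2 * D)" by (rule power_int_of_nat)
        also have "\<dots> = (q^2)^D" by (simp add: power_mult)
        finally show ?thesis using qD by simp
      qed
      finally show ?thesis by simp
    qed
    then have "u ^ D = \<sigma> ^ D" unfolding u_def by (simp add: power_mult_distrib)
    ultimately show "chebs D (lam q \<sigma> (int j)) = z0 D \<sigma>"
      unfolding z0_def by (simp add: power_inverse)
  qed
  have RC: "meq D (cheb_mat D D (rho0 D q \<sigma>)) (msmult (z0 D \<sigma>) mid)"
  proof (rule meq_via)
    show "meq D (cheb_mat D D (rho0 D q \<sigma>)) (penta D (\<lambda>j. chebs D (L j)) zz zz zz zz)"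
      by (rule cheb_penta[OF Dpos A0])
    show "meq D (msmult (z0 D \<sigma>) mid) (msmult (z0 D \<sigma>) (penta D (\<lambda>_. 1) zz zz zz zz))"
      by (intro meq_msmult mid_penta)
    show "penta D (\<lambda>j. chebs D (L j)) zz zz zz zz = msmult (z0 D \<sigma>) (penta D (\<lambda>_. 1) zz zz zz zz)"
      unfolding msmult_penta by (rule penta_cong) (simp_all add: L_def chebL)
  qed
  show ?thesis unfolding skein_rels_def D_def[symmetric] using R1 R2 R3 RC RP by blast
qed

end
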